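(* Let $m\ge 2$ be an integer such that $p_1(x)=x^{m+2}+x+1$ is irreducible over $\mathrm{GF}(2)$, and let $F=\mathrm{GF}(2^{m+2})=\mathrm{GF}(2)[x]/(p_1(x))$, whose elements are identified with the polynomials over $\mathrm{GF}(2)$ of degree at most $m+1$. Let $D_0$ be the multiplication table of $F$ (rows and columns indexed by the elements of $F$, entry in row $a$ and column $b$ equal to $ab$ computed in $F$). Let $D_1$ be the $2^{m+2}\times 4$ submatrix of $D_0$ consisting of the columns indexed by $0,1,x,x+1$, and let $D_2$ be the submatrix of $D_1$ consisting of the $2^m$ rows indexed by the elements of $r_{m-2}\cup\big(x^{m+1}+x^m+x^{m-1}+r_{m-2}\big)$. Then: (i) $D_1$ is a difference matrix $D(2^{m+2},2^2,2^{m+2})$ over the additive group of $F$; (ii) $\phi(D_2)$ is a difference matrix $D(2^m,2^2,2^m)$ over the additive group of $\mathrm{GF}(2^m)$.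
   Context: $r_{m-2}$ denotes the set of all polynomials over $\mathrm{GF}(2)$ of degree at most $m-2$, and $q+S=\{q+s:s\in S\}$. A difference matrix $D(b,c,g)$ over a finite abelian group $\mathcal{A}$ of order $g$ is a $b\times c$ array with entries in $\mathcal{A}$ such that, for any two distinct columns, their entrywise difference vector contains every element of $\mathcal{A}$ equally often. Elements of $\mathrm{GF}(2^m)$ are identified (as an additive group) with polynomials over $\mathrm{GF}(2)$ of degree at most $m-1$. The truncation projection $\phi$ maps $a_0+a_1x+\cdots+a_{m+1}x^{m+1}\in F$ to $a_0+a_1x+\cdots+a_{m-1}x^{m-1}$; for an array $D$, $\phi(D)$ is obtained by applying $\phi$ entrywise. *)

theory Defs
  imports "HOL-Library.Z2" "HOL-Computational_Algebra.Polynomial"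
    "HOL-Computational_Algebra.Polynomial_Factorial"
begin

definition p1 :: "nat \<Rightarrow> bit poly" where
  "p1 m = monom 1 (m + 2) + [:0, 1:] + 1"

text \<open>Additive group of GF(2^n): polynomials over GF(2) of degree at most n-1
  (for n \<ge> 1; the zero polynomial has degree 0).\<close>
definition gf_elems :: "nat \<Rightarrow> bit poly set" where
  "gf_elems n = {q. degree q < n}"

definition r_set :: "nat \<Rightarrow> bit poly set" where
  "r_set k = {q. degree q \<le> k}"

definition phi :: "nat \<Rightarrow> bit poly \<Rightarrow> bit poly" where
  "phi m p = (\<Sum>i<m. monom (coeff p i) i)"

definition diff_matrix ::
  "nat \<Rightarrow> nat \<Rightarrow> nat \<Rightarrow> 'g::ab_group_add set \<Rightarrow> 'r set \<Rightarrow> 'c set \<Rightarrow> ('r \<Rightarrow> 'c \<Rightarrow> 'g) \<Rightarrow> bool"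
  where
  "diff_matrix b c g G R C D \<longleftrightarrow>
     finite R \<and> finite C \<and> finite G \<and> card R = b \<and> card C = c \<and> card G = g \<and>
     (\<forall>r\<in>R. \<forall>j\<in>C. D r j \<in> G) \<and>
     (\<forall>j\<in>C. \<forall>k\<in>C. j \<noteq> k \<longrightarrow>
        (\<forall>u\<in>G. \<forall>v\<in>G. card {r\<in>R. D r j - D r k = u} = card {r\<in>R. D r j - D r k = v}))"

end

theory Submission imports Defs begin

lemma bit_add_self [simp]: "(b::bit) + b = 0"
  by (cases b) simp_all

lemma bpoly_add_self [simp]: "(q::bit poly) + q = 0"
  by (rule poly_eqI) (simp only: coeff_add bit_add_self coeff_0)

lemma bpoly_minus: "(a::bit poly) - b = a + b"
  by (simp add: poly_eq_iff)

lemma univ_bit: "(UNIV::bit set) = {0,1}" by (auto intro: bit.exhaust)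

lemma finite_bit [simp]: "finite (UNIV::bit set)"
  by (simp only: univ_bit) simp

lemma card_bit: "card (UNIV::bit set) = 2"
proof -
  have "card {0::bit,1} = 2" by simp
  then show ?thesis by (simp only: univ_bit)
qed

lemma coeff_phi: "coeff (phi m q) n = (if n < m then coeff q n else 0)"
  unfolding phi_def by (simp add: coeff_sum coeff_monom)

lemma phi_add: "phi m (a + b) = phi m a + phi m b"
  by (simp add: poly_eq_iff coeff_phi)

lemma phi_id: "degree q < m \<Longrightarrow> phi m q = q"
  by (auto simp add: poly_eq_iff coeff_phi coeff_eq_0)

lemma phi_monom_big: "m \<le> k \<Longrightarrow> phi m (monom c k) = 0"
  by (auto simp add: poly_eq_iff coeff_phi coeff_monom)

lemma degree_phi: "m \<ge> 1 \<Longrightarrow> degree (phi m q) < m"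
proof -
  assume "m \<ge> 1"
  have "degree (phi m q) \<le> m - 1"
    by (rule degree_le) (auto simp: coeff_phi)
  then show ?thesis using \<open>m \<ge> 1\<close> by linarith
qed

lemma gf_Suc: "n \<ge> 1 \<Longrightarrow> gf_elems (Suc n) = (\<lambda>(a,q). pCons a q) ` (UNIV \<times> gf_elems n)"
proof (intro set_eqI iffI)
  fix x assume n: "n \<ge> 1" and x: "x \<in> gf_elems (Suc n)"
  obtain a q where xq: "x = pCons a q" by (cases x)
  have "degree q < n"
  proof (cases "q = 0")
    case True then show ?thesis using n by simp
  next
    case False then show ?thesis using x xq by (simp add: gf_elems_def)
  qed
  then show "x \<in> (\<lambda>(a,q). pCons a q) ` (UNIV \<times> gf_elems n)"
    using xq by (auto simp: gf_elems_def)
next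
  fix x assume "x \<in> (\<lambda>(a,q). pCons a q) ` (UNIV \<times> gf_elems n)"
  then obtain a q where "x = pCons a q" "degree q < n" by (auto simp: gf_elems_def)
  then show "x \<in> gf_elems (Suc n)"
    by (cases "q = 0") (auto simp: gf_elems_def)
qed

lemma card_gf: "n \<ge> 1 \<Longrightarrow> finite (gf_elems n) \<and> card (gf_elems n) = 2 ^ n"
proof (induction n rule: dec_induct)
  case base
  have "gf_elems 1 = range (\<lambda>a. [:a:])"
    by (auto simp: gf_elems_def elim!: degree_eq_zeroE)
  moreover have "inj (\<lambda>a::bit. [:a:])" by (auto intro: injI)
  ultimately show ?case by (simp add: card_image card_bit)
next
  case (step n)
  have "inj_on (\<lambda>(a,q). pCons a q) (UNIV \<times> gf_elems n)"
    by (auto intro: inj_onI)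
  then show ?case using step gf_Suc[of n]
    by (simp add: card_image card_cartesian_product card_bit)
qed


lemma degree_p1: "degree (p1 m) = m + 2"
proof -
  have "degree ([:0,1:] + 1 :: bit poly) \<le> 1"
    by (simp add: one_pCons)
  then have "degree ([:0,1:] + 1 :: bit poly) < degree (monom (1::bit) (m+2))"
    by (simp add: degree_monom_eq)
  then show ?thesis unfolding p1_def
    by (simp add: degree_add_eq_left degree_monom_eq add.assoc)
qed

lemma deg_mod: "degree (x mod (p1 m)) < m + 2"
proof (cases "x mod p1 m = 0")
  case True then show ?thesis by simp
next
  case False
  have "p1 m \<noteq> 0" using degree_p1[of m] by auto
  then show ?thesis using degree_mod_less'[OF _ False] degree_p1[of m] by simp
qed

lemma count_one:
  assumes "finite R" "finite G" "card R = card G" "inj_on f R" "f ` R \<subseteq> G" "u \<in> G"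
  shows "card {r\<in>R. f r = u} = 1"
proof -
  have "card (f ` R) = card G" using assms card_image by metis
  then have "f ` R = G" using assms card_subset_eq by metis
  then obtain r where r: "r \<in> R" "f r = u" using assms(6) by blast
  then have "{r\<in>R. f r = u} = {r}" using assms(4) by (auto dest: inj_onD)
  then show ?thesis by simp
qed

lemma diff_matrix_intro:
  assumes "finite R" "finite G" "finite C" "card R = b" "card C = c" "card G = g" "card R = card G"
    "\<forall>r\<in>R. \<forall>j\<in>C. D r j \<in> G"
    "\<And>j k. j \<in> C \<Longrightarrow> k \<in> C \<Longrightarrow> j \<noteq> k \<Longrightarrow> inj_on (\<lambda>r. D r j - D r k) R"
    "\<And>x y. x \<in> G \<Longrightarrow> y \<in> G \<Longrightarrow> x - y \<in> G"
  shows "diff_matrix b c g G R C D"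
  unfolding diff_matrix_def
proof (intro conjI assms(1-8) ballI impI)
  fix j k u v assume jk: "j \<in> C" "k \<in> C" "j \<noteq> k" and uv: "u \<in> G" "v \<in> G"
  have im: "(\<lambda>r. D r j - D r k) ` R \<subseteq> G" using assms(8,10) jk by auto
  show "card {r\<in>R. D r j - D r k = u} = card {r\<in>R. D r j - D r k = v}"
    using count_one[OF assms(1,2,7) assms(9)[OF jk] im] uv by simp
qed

lemma gf_diff: "x \<in> gf_elems n \<Longrightarrow> y \<in> gf_elems n \<Longrightarrow> x - y \<in> gf_elems n"
  unfolding gf_elems_def using degree_diff_le_max[of x y] by auto

lemma cols_card: "card {0, 1, [:0, 1:], [:1, 1:] :: bit poly} = 4"
  by (simp add: one_pCons)

lemma cols_deg: "j \<in> {0, 1, [:0, 1:], [:1, 1:] :: bit poly} \<Longrightarrow> degree j \<le> 1"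
  by (auto simp: one_pCons)

lemma mod_diff': "(x::bit poly) mod p - y mod p = (x - y) mod p"
  by (simp add: poly_mod_diff_left)

lemma part1:
  assumes "m \<ge> 2" "irreducible (p1 m)"
  shows "diff_matrix (2 ^ (m + 2)) (2 ^ 2) (2 ^ (m + 2))
           (gf_elems (m + 2)) (gf_elems (m + 2)) {0, 1, [:0, 1:], [:1, 1:]}
           (\<lambda>a b. (a * b) mod p1 m)"
proof (rule diff_matrix_intro)
  show "finite (gf_elems (m+2))" "card (gf_elems (m+2)) = 2 ^ (m+2)"
    using card_gf[of "m+2"] by auto
  show "finite {0, 1, [:0, 1:], [:1, 1:] :: bit poly}" by simp
  show "card {0, 1, [:0, 1:], [:1, 1:] :: bit poly} = 2^2" using cols_card by simp
  show "card (gf_elems (m+2)) = card (gf_elems (m+2))" by simp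
  show "\<forall>r\<in>gf_elems (m + 2). \<forall>j\<in>{0, 1, [:0, 1:], [:1, 1:]}. r * j mod p1 m \<in> gf_elems (m + 2)"
    using deg_mod by (simp add: gf_elems_def)
  show "\<And>x y. x \<in> gf_elems (m+2) \<Longrightarrow> y \<in> gf_elems (m+2) \<Longrightarrow> x - y \<in> gf_elems (m+2)"
    by (rule gf_diff)
  have pr: "prime_elem (p1 m)" using assms(2) by (rule field_poly_irreducible_imp_prime)
  fix j k assume jk: "j \<in> {0, 1, [:0, 1:], [:1, 1:] :: bit poly}" "k \<in> {0, 1, [:0, 1:], [:1, 1:]}" "j \<noteq> k"
  define c where "c = j - k"
  have c0: "c \<noteq> 0" using jk(3) by (simp add: c_def)
  have cd: "degree c \<le> 1" using cols_deg[OF jk(1)] cols_deg[OF jk(2)] degree_diff_le_max[of j k]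
    by (simp add: c_def)
  show "inj_on (\<lambda>r. r * j mod p1 m - r * k mod p1 m) (gf_elems (m + 2))"
  proof (rule inj_onI)
    fix a b assume ab: "a \<in> gf_elems (m+2)" "b \<in> gf_elems (m+2)"
      and eq: "a * j mod p1 m - a * k mod p1 m = b * j mod p1 m - b * k mod p1 m"
    have "(a * c) mod p1 m = (b * c) mod p1 m" using eq
      by (simp add: mod_diff' c_def right_diff_distrib)
    then have "p1 m dvd (a - b) * c" by (simp add: mod_eq_dvd_iff left_diff_distrib)
    then have "p1 m dvd (a - b) \<or> p1 m dvd c" using pr prime_elem_dvd_mult_iff by blast
    moreover have "\<not> p1 m dvd c" using dvd_imp_degree_le[of "p1 m" c] c0 cd degree_p1[of m] by auto
    moreover have "a - b \<noteq> 0 \<Longrightarrow> \<not> p1 m dvd (a - b)"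
      using dvd_imp_degree_le[of "p1 m" "a-b"] degree_diff_le_max[of a b] ab degree_p1[of m]
      by (auto simp: gf_elems_def)
    ultimately show "a = b" by auto
  qed
qed (use card_gf[of "m+2"] in auto)


lemma x_monom: "[:0,1::bit:] = monom 1 1"
  by (simp add: monom_Suc)

lemma mx: "monom (1::bit) a * [:0,1:] = monom 1 (Suc a)"
  by (simp add: x_monom mult_monom)

lemma three0: "[:0,1:] + 1 + [:1,1:] = (0::bit poly)"
  by (simp add: one_pCons)

lemma p1_Suc: "p1 (Suc n) = monom 1 (Suc (Suc (Suc n))) + [:0,1:] + 1"
proof -
  have e: "Suc n + 2 = Suc (Suc (Suc n))" by simp
  show ?thesis by (simp only: p1_def e)
qed

lemma hx: "(monom 1 (Suc (Suc n)) + monom 1 (Suc n) + monom 1 n) * [:0,1:]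
   = p1 (Suc n) + (monom 1 (Suc (Suc n)) + monom 1 (Suc n) + [:1,1:])"
proof -
  have "(monom 1 (Suc (Suc n)) + monom 1 (Suc n) + monom 1 n) * [:0,1::bit:]
     = monom 1 (Suc (Suc (Suc n))) + monom 1 (Suc (Suc n)) + monom 1 (Suc n)"
    by (simp only: distrib_right mx)
  also have "\<dots> = monom 1 (Suc (Suc (Suc n))) + monom 1 (Suc (Suc n)) + monom 1 (Suc n) + ([:0,1:] + 1 + [:1,1:])"
    by (simp only: three0 add_0_right)
  also have "\<dots> = p1 (Suc n) + (monom 1 (Suc (Suc n)) + monom 1 (Suc n) + [:1,1:])"
    unfolding p1_Suc by (simp only: add_ac)
  finally show ?thesis .
qed


lemma phi_diff: "phi m (a - b) = phi m a - phi m b"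
  by (simp add: poly_eq_iff coeff_phi)

lemma deg_H: "degree (monom (1::bit) (Suc (Suc n)) + monom 1 (Suc n) + monom 1 n) \<le> Suc (Suc n)"
  by (rule degree_le) (auto simp: coeff_monom)

lemma deg_Rr: "n \<ge> 1 \<Longrightarrow> degree (monom (1::bit) (Suc (Suc n)) + monom 1 (Suc n) + [:1,1:]) \<le> Suc (Suc n)"
  by (rule degree_le) (auto simp: coeff_monom coeff_pCons split: nat.split)

lemma deg_sum_le: "degree (a::bit poly) \<le> d \<Longrightarrow> degree b \<le> d \<Longrightarrow> degree (a + b) \<le> d"
  using degree_add_le by blast

lemma mod_small: "degree q < Suc n + 2 \<Longrightarrow> q mod p1 (Suc n) = q"
  by (rule mod_poly_less) (simp add: degree_p1)

lemma phi_H: "phi (Suc n) (monom (1::bit) (Suc (Suc n)) + monom 1 (Suc n) + monom 1 n) = monom 1 n"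
  by (simp add: phi_add phi_monom_big phi_id degree_monom_eq)

lemma phi_Rr: "n \<ge> 1 \<Longrightarrow> phi (Suc n) (monom (1::bit) (Suc (Suc n)) + monom 1 (Suc n) + [:1,1:]) = [:1,1:]"
  by (simp add: phi_add phi_monom_big phi_id)


abbreviation HH :: "nat \<Rightarrow> bit poly" where
  "HH n \<equiv> monom 1 (Suc (Suc n)) + monom 1 (Suc n) + monom 1 n"
abbreviation RR :: "nat \<Rightarrow> bit poly" where
  "RR n \<equiv> monom 1 (Suc (Suc n)) + monom 1 (Suc n) + [:1,1:]"

lemma Hc_mod:
  assumes "n \<ge> 1"
  shows "(HH n * 1) mod p1 (Suc n) = HH n"
    "(HH n * [:0,1:]) mod p1 (Suc n) = RR n"
    "(HH n * [:1,1:]) mod p1 (Suc n) = RR n + HH n"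
proof -
  show "(HH n * 1) mod p1 (Suc n) = HH n"
    using deg_H[of n] by (simp add: mod_small)
  show a: "(HH n * [:0,1:]) mod p1 (Suc n) = RR n"
    unfolding hx using deg_Rr[OF assms] by (simp add: mod_small)
  have "[:1,1::bit:] = [:0,1:] + 1" by (simp add: one_pCons)
  then have "HH n * [:1,1:] = HH n * [:0,1:] + HH n" by (simp add: distrib_left)
  moreover have hm: "HH n mod p1 (Suc n) = HH n"
    using deg_H[of n] by (simp add: mod_small)
  ultimately show "(HH n * [:1,1:]) mod p1 (Suc n) = RR n + HH n"
    using a by (simp only: poly_mod_add_left)
qed

lemma ker:
  assumes n: "n \<ge> 1" and c: "c \<in> {1, [:0,1:], [:1,1::bit:]}"
    and s: "degree s \<le> n - 1" and a: "a = s \<or> a = HH n + s"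
    and z: "phi (Suc n) ((a * c) mod p1 (Suc n)) = 0"
  shows "a = 0"
proof -
  have c0: "c \<noteq> 0" and cd: "degree c \<le> 1" using c by (auto simp: one_pCons)
  have dsc: "degree (s * c) < Suc n"
    using degree_mult_le[of s c] s cd n by linarith
  have sc: "phi (Suc n) ((s * c) mod p1 (Suc n)) = s * c"
    using dsc by (simp add: mod_small phi_id)
  show ?thesis
  proof (cases "a = s")
    case True
    then have "s * c = 0" using z sc by simp
    then show ?thesis using True c0 by simp
  next
    case False
    then have aH: "a = HH n + s" using a by simp
    have "phi (Suc n) ((a * c) mod p1 (Suc n))
        = phi (Suc n) ((HH n * c) mod p1 (Suc n)) + s * c"
      using sc by (simp add: aH distrib_right poly_mod_add_left phi_add)
    then have eq: "phi (Suc n) ((HH n * c) mod p1 (Suc n)) + s * c = 0" using z by simp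
    have "coeff s n = 0" using s n by (intro coeff_eq_0) linarith
    from c have False
    proof (elim insertE)
      assume "c = 1"
      then have "monom 1 n + s * 1 = 0" using eq by (simp only: Hc_mod(1)[OF n] phi_H[of n])
      then have "coeff (monom 1 n + s) n = 0" by simp
      then show False using \<open>coeff s n = 0\<close> by simp
    next
      assume "c = [:0,1:]"
      then have "[:1,1:] + s * [:0,1:] = 0" using eq by (simp only: Hc_mod(2)[OF n] phi_Rr[OF n])
      then have "coeff ([:1,1:] + s * [:0,1:]) 0 = 0" by simp
      then show False by simp
    next
      assume "c = [:1,1:]"
      then have "[:1,1:] + monom 1 n + s * [:1,1:] = 0"
      proof -
        have "phi (Suc n) (RR n + HH n) = [:1,1:] + monom 1 n"
          by (simp only: phi_add[of _ "RR n" "HH n"] phi_Rr[OF n] phi_H[of n])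
        then show ?thesis using eq \<open>c = [:1,1:]\<close> by (simp only: Hc_mod(3)[OF n])
      qed
      then have "poly ([:1,1:] + monom 1 n + s * [:1,1:]) 1 = 0" by simp
      then show False by (simp add: poly_monom)
    qed simp
    then show ?thesis ..
  qed
qed


lemma card_union_shift:
  assumes "finite A" "\<forall>s\<in>A. coeff s d = 0" "coeff (h::bit poly) d \<noteq> 0"
  shows "finite (A \<union> (\<lambda>s. h + s) ` A) \<and> card (A \<union> (\<lambda>s. h + s) ` A) = 2 * card A"
proof -
  have "coeff (h + s) d \<noteq> 0" if "s \<in> A" for s using assms(2,3) that by simp
  then have disj: "A \<inter> (\<lambda>s. h + s) ` A = {}" using assms(2) by (auto simp del: coeff_add)
  have inj: "inj_on (\<lambda>s. h + s) A" by (auto intro: inj_onI)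
  show ?thesis using assms(1) card_Un_disjoint[OF assms(1) _ disj] card_image[OF inj] by simp
qed

lemma cdiff: "j \<in> {0, 1, [:0, 1:], [:1, 1:]} \<Longrightarrow> k \<in> {0, 1, [:0, 1:], [:1, 1:]} \<Longrightarrow> j \<noteq> k
  \<Longrightarrow> j - k \<in> {1, [:0, 1:], [:1, 1::bit:]}"
  by (auto simp: bpoly_minus one_pCons)

lemma part2:
  assumes "m \<ge> 2"
  shows "diff_matrix (2 ^ m) (2 ^ 2) (2 ^ m)
           (gf_elems m)
           (r_set (m - 2) \<union> ((\<lambda>s. monom 1 (m + 1) + monom 1 m + monom 1 (m - 1) + s) ` r_set (m - 2)))
           {0, 1, [:0, 1:], [:1, 1:]}
           (\<lambda>a b. phi m ((a * b) mod p1 m))"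
proof -
  obtain n where m: "m = Suc n" and n: "n \<ge> 1" using assms by (metis Suc_le_D Suc_le_mono one_add_one plus_1_eq_Suc)
  define R where "R = r_set (m - 2) \<union> ((\<lambda>s. monom 1 (m + 1) + monom 1 m + monom 1 (m - 1) + s) ` r_set (m - 2))"
  have rg: "r_set (m - 2) = gf_elems n" using n by (auto simp: r_set_def gf_elems_def m)
  have Rchar: "R = {a. \<exists>s. degree s \<le> n - 1 \<and> (a = s \<or> a = HH n + s)}"
    unfolding R_def m by (auto simp: r_set_def)
  have cR: "finite R \<and> card R = 2 ^ m"
  proof -
    have "coeff (monom 1 (m + 1) + monom 1 m + monom (1::bit) (m - 1)) (m+1) \<noteq> 0"
      using assms by (simp add: coeff_monom)
    moreover have "\<forall>s\<in>r_set (m-2). coeff s (m+1) = 0"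
      using assms by (auto simp: r_set_def intro: coeff_eq_0)
    ultimately show ?thesis unfolding R_def
      using card_union_shift[of "r_set (m-2)" "m+1"] card_gf[OF n] rg m by auto
  qed
  have closed: "a + b \<in> R" if ab: "a \<in> R" "b \<in> R" for a b
  proof -
    obtain s1 where s1: "degree s1 \<le> n - 1" "a = s1 \<or> a = HH n + s1" using ab(1) Rchar by auto
    obtain s2 where s2: "degree s2 \<le> n - 1" "b = s2 \<or> b = HH n + s2" using ab(2) Rchar by auto
    have d: "degree (s1 + s2) \<le> n - 1" using s1(1) s2(1) by (rule deg_sum_le)
    have e: "(HH n + s1) + (HH n + s2) = (HH n + HH n) + (s1 + s2)" by (simp only: add_ac)
    have "\<exists>s. degree s \<le> n - 1 \<and> (a + b = s \<or> a + b = HH n + s)"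
    proof -
      have "a + b = s1 + s2 \<or> a + b = HH n + (s1 + s2)"
      proof (cases "a = s1")
        case True
        then show ?thesis using s2(2)
        proof (elim disjE)
          assume "a = s1" "b = HH n + s2"
          then have "a + b = HH n + (s1 + s2)" by (simp only: add_ac)
          then show ?thesis ..
        qed simp
      next
        case False
        then have a: "a = HH n + s1" using s1(2) by simp
        show ?thesis using s2(2)
        proof (elim disjE)
          assume "b = s2"
          then have "a + b = HH n + (s1 + s2)" using a by (simp only: add_ac)
          then show ?thesis ..
        next
          assume "b = HH n + s2"
          then have "a + b = s1 + s2" using a e by simp
          then show ?thesis ..
        qed
      qed
      then show ?thesis using d by blast
    qed
    then show ?thesis using Rchar by simp
  qed
  show ?thesis unfolding R_def[symmetric]
  proof (rule diff_matrix_intro)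
    show "finite (gf_elems m)" "card (gf_elems m) = 2 ^ m" using card_gf[of m] assms by auto
    show "finite R" "card R = 2 ^ m" using cR by auto
    show "finite {0, 1, [:0, 1:], [:1, 1:] :: bit poly}" by simp
    show "card {0, 1, [:0, 1:], [:1, 1:] :: bit poly} = 2^2" using cols_card by simp
    show "card R = card (gf_elems m)" using cR card_gf[of m] assms by auto
    show "\<forall>r\<in>R. \<forall>j\<in>{0, 1, [:0, 1:], [:1, 1:]}. phi m (r * j mod p1 m) \<in> gf_elems m"
      using degree_phi[of m] assms by (simp add: gf_elems_def)
    show "\<And>x y. x \<in> gf_elems m \<Longrightarrow> y \<in> gf_elems m \<Longrightarrow> x - y \<in> gf_elems m"
      by (rule gf_diff)
    fix j k assume jk: "j \<in> {0, 1, [:0, 1:], [:1, 1:] :: bit poly}" "k \<in> {0, 1, [:0, 1:], [:1, 1:]}" "j \<noteq> k"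
    define c where "c = j - k"
    have c: "c \<in> {1, [:0, 1:], [:1, 1:]}" using cdiff[OF jk] by (simp add: c_def)
    define f where "f r = phi m ((r * c) mod p1 m)" for r
    have fe: "phi m (r * j mod p1 m) - phi m (r * k mod p1 m) = f r" for r
      by (simp add: f_def c_def phi_diff poly_mod_diff_left right_diff_distrib)
    have fadd: "f (a + b) = f a + f b" for a b
      by (simp add: f_def distrib_right poly_mod_add_left phi_add)
    have fker: "a \<in> R \<Longrightarrow> f a = 0 \<Longrightarrow> a = 0" for a
    proof -
      assume "a \<in> R" "f a = 0"
      then obtain s where "degree s \<le> n - 1" "a = s \<or> a = HH n + s" using Rchar by auto
      then show "a = 0" using ker[OF n c] \<open>f a = 0\<close> by (simp add: f_def m)
    qed
    have "inj_on f R"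
    proof (rule inj_onI)
      fix a b assume ab: "a \<in> R" "b \<in> R" "f a = f b"
      have "f (a + b) = 0" using ab(3) by (simp add: fadd)
      then have "a + b = 0" using fker closed ab by blast
      then have "a + (a + b) = a" by simp
      then show "a = b" by (simp add: add.assoc[symmetric])
    qed
    then show "inj_on (\<lambda>r. phi m (r * j mod p1 m) - phi m (r * k mod p1 m)) R"
      by (simp add: fe)
  qed
qed

theorem theorem2:
  fixes m :: nat
  assumes "m \<ge> 2"
    and "irreducible (p1 m)"
  shows "diff_matrix (2 ^ (m + 2)) (2 ^ 2) (2 ^ (m + 2))
           (gf_elems (m + 2)) (gf_elems (m + 2)) {0, 1, [:0, 1:], [:1, 1:]}
           (\<lambda>a b. (a * b) mod p1 m) \<and>
         diff_matrix (2 ^ m) (2 ^ 2) (2 ^ m)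
           (gf_elems m)
           (r_set (m - 2) \<union> ((\<lambda>s. monom 1 (m + 1) + monom 1 m + monom 1 (m - 1) + s) ` r_set (m - 2)))
           {0, 1, [:0, 1:], [:1, 1:]}
           (\<lambda>a b. phi m ((a * b) mod p1 m))"
  using part1[OF assms] part2[OF assms(1)] by blast

end
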